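(* For $n\ge1$ let $T_n$ be the program defined below. The class $\{T_n: n\ge 1\}$ is isomorphically complete with respect to the cascade program product: for every program $P$ there exists a cascade program product $\mathbf P$ all of whose factors are programs from $\{T_n:n\ge1\}$ such that $\Psi_P\in\mathbf I\mathbf S(\{\Psi_{\mathbf P}\})$, i.e. the characteristic automaton of $P$ is isomorphic to a subautomaton of the characteristic automaton of $\mathbf P$.
   Context: Notation: $[n]=\{1,\dots,n\}$. Programs: a (normal logic) program $P$ over a finite nonempty set of atoms $\Gamma_P$ is a finite nonempty set of rules $a\leftarrow b_1,\dots,b_k,\mathrm{not}\,b_{k+1},\dots,\mathrm{not}\,b_m$ ($m\ge k\ge 0$, atoms in $\Gamma_P$); for such a rule $r$, $H(r)=a$, $B^+(r)=\{b_1,\dots,b_k\}$, $B^-(r)=\{b_{k+1},\dots,b_m\}$. $\mathcal I_P$ is the power set of $\Gamma_P$. $\Psi_P:\mathcal I_P\times\mathcal I_P\to\mathcal I_P$ is $\Psi_P(I,J)=\{H(r): r\in P,\ B^+(r)\subseteq I,\ B^-(r)\cap J=\emptyset\}$. The characteristic automaton of $P$ is $\langle \mathcal I_P,\mathcal I_P,\Psi_P\rangle$, also denoted $\Psi_P$. The programs $T_n$: for $n\ge1$ let $\sigma_1,\dots,\sigma_{n^n}$ enumerate all mappings $[n]\to[n]$. $T_n$ is the program over $[n^n]$ consisting of the rules $\sigma_k(j)\leftarrow j,\ \mathrm{not}\,k$ for all $j\in[n]$ and $k\in[n^n]$. Automata: an automaton $\langle Q,\Sigma,\delta\rangle$ has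 finite state set $Q$, finite nonempty input alphabet $\Sigma$, and $\delta:Q\times\Sigma\to Q$. $\langle Q',\Sigma',\delta'\rangle$ is a subautomaton of $\langle Q,\Sigma,\delta\rangle$ if $Q'\subseteq Q$, $\Sigma'\subseteq\Sigma$, $\delta(Q'\times\Sigma')\subseteq Q'$ and $\delta'=\delta|_{Q'\times\Sigma'}$. An isomorphism onto $\langle Q',\Sigma',\delta'\rangle$ is a pair of bijections $h_1:Q\to Q'$, $h_2:\Sigma\to\Sigma'$ with $h_1(\delta(q,x))=\delta'(h_1(q),h_2(x))$ for all $q,x$. $\mathbf S(\mathcal A)$, $\mathbf I(\mathcal A)$ denote the classes of subautomata and isomorphic images of automata in $\mathcal A$. Cascade program product: let $P_1,\dots,P_k$ ($k\ge1$) be programs and $\mathcal I_{\mathbf P}$ a finite nonempty set. A feedforward function is $\psi_{\mathbf P}=(\psi_{\mathbf P,1},\dots,\psi_{\mathbf P,k})$ with $\psi_{\mathbf P,i}:(\mathcal I_{P_1}\times\dots\times\mathcal I_{P_k})\times\mathcal I_{\mathbf P}\to\mathcal I_{P_i}$ not depending on its $j$-th component for any $j\ge i$. The product $\mathbf P=P_1\ltimes\dots\ltimes P_k[\mathcal I_{\mathbf P},\psi_{\mathbf P}]$ has characteristic automaton $\Psi_{\mathbf P}=\langle \mathcal I_{P_1}\times\dots\times\mathcal I_{P_k},\ \mathcal I_{\mathbf P},\ \Psi_{\mathbf P}\rangle$ with $\Psi_{\mathbf P}((I_1,\dots,I_k),\mathbf J)=\big(\Psi_{P_1}(I_1,\psi_{\mathbf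 P,1}(\mathbf J)),\dots,\Psi_{P_k}(I_k,\psi_{\mathbf P,k}((I_1,\dots,I_{k-1}),\mathbf J))\big)$. The product isomorphically represents $P$ if $\Psi_P\in\mathbf I\mathbf S(\{\Psi_{\mathbf P}\})$. *)

theory Defs
  imports "HOL-Library.FuncSet"
begin

text \<open>A rule  a <- b1,...,bk, not b(k+1),...,not bm  is represented as the triple
  (H(r), B+(r), B-(r)).\<close>
type_synonym 'a rule = "'a \<times> 'a set \<times> 'a set"

definition is_program :: "'a set \<Rightarrow> 'a rule set \<Rightarrow> bool" where
  "is_program Gam R \<longleftrightarrow> finite Gam \<and> Gam \<noteq> {} \<and> finite R \<and> R \<noteq> {} \<and>
     (\<forall>(h, bp, bn) \<in> R. h \<in> Gam \<and> bp \<subseteq> Gam \<and> bn \<subseteq> Gam)"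

definition Psi :: "'a rule set \<Rightarrow> 'a set \<Rightarrow> 'a set \<Rightarrow> 'a set" where
  "Psi R I J = {h. \<exists>bp bn. (h, bp, bn) \<in> R \<and> bp \<subseteq> I \<and> bn \<inter> J = {}}"

type_synonym ('q, 's) automaton = "'q set \<times> 's set \<times> ('q \<Rightarrow> 's \<Rightarrow> 'q)"

definition is_automaton :: "('q, 's) automaton \<Rightarrow> bool" where
  "is_automaton A \<longleftrightarrow> (case A of (Q, S, d) \<Rightarrow>
     finite Q \<and> finite S \<and> S \<noteq> {} \<and> (\<forall>q\<in>Q. \<forall>x\<in>S. d q x \<in> Q))"

definition subautomaton :: "('q, 's) automaton \<Rightarrow> ('q, 's) automaton \<Rightarrow> bool" where
  "subautomaton A' A \<longleftrightarrow> (case A' of (Q', S', d') \<Rightarrow> case A of (Q, S, d) \<Rightarrow>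
     is_automaton A' \<and> Q' \<subseteq> Q \<and> S' \<subseteq> S \<and> (\<forall>q\<in>Q'. \<forall>x\<in>S'. d q x \<in> Q') \<and>
     (\<forall>q\<in>Q'. \<forall>x\<in>S'. d' q x = d q x))"

definition aut_iso :: "('q \<Rightarrow> 'q2) \<Rightarrow> ('s \<Rightarrow> 's2) \<Rightarrow> ('q, 's) automaton \<Rightarrow> ('q2, 's2) automaton \<Rightarrow> bool" where
  "aut_iso h1 h2 A B \<longleftrightarrow> (case A of (Q, S, d) \<Rightarrow> case B of (Q', S', d') \<Rightarrow>
     bij_betw h1 Q Q' \<and> bij_betw h2 S S' \<and>
     (\<forall>q\<in>Q. \<forall>x\<in>S. h1 (d q x) = d' (h1 q) (h2 x)))"

definition in_IS :: "('q, 's) automaton \<Rightarrow> ('q2, 's2) automaton \<Rightarrow> bool" where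
  "in_IS A B \<longleftrightarrow> (\<exists>A' h1 h2. subautomaton A' B \<and> aut_iso h1 h2 A A')"

definition char_aut :: "'a set \<Rightarrow> 'a rule set \<Rightarrow> ('a set, 'a set) automaton" where
  "char_aut Gam R = (Pow Gam, Pow Gam, Psi R)"

text \<open>Cascade product of the programs Ps = [P_1,...,P_k] (0-indexed) with input set IP
  and feedforward function psi; psi i receives the first i components (I_1,...,I_i-1)
  of the state, so it does not depend on components j >= i.\<close>
definition casc_states :: "('b set \<times> 'b rule set) list \<Rightarrow> 'b set list set" where
  "casc_states Ps = {xs. length xs = length Ps \<and> (\<forall>i<length Ps. xs ! i \<subseteq> fst (Ps ! i))}"

definition casc_trans :: "('b set \<times> 'b rule set) list \<Rightarrow> (nat \<Rightarrow> 'b set list \<Rightarrow> 'c \<Rightarrow> 'b set)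
     \<Rightarrow> 'b set list \<Rightarrow> 'c \<Rightarrow> 'b set list" where
  "casc_trans Ps psi xs J =
     map (\<lambda>i. Psi (snd (Ps ! i)) (xs ! i) (psi i (take i xs) J)) [0..<length Ps]"

definition is_cascade :: "('b set \<times> 'b rule set) list \<Rightarrow> 'c set \<Rightarrow> (nat \<Rightarrow> 'b set list \<Rightarrow> 'c \<Rightarrow> 'b set) \<Rightarrow> bool" where
  "is_cascade Ps IP psi \<longleftrightarrow> Ps \<noteq> [] \<and> (\<forall>(G, R) \<in> set Ps. is_program G R) \<and>
     finite IP \<and> IP \<noteq> {} \<and>
     (\<forall>xs\<in>casc_states Ps. \<forall>J\<in>IP. \<forall>i<length Ps. psi i (take i xs) J \<subseteq> fst (Ps ! i))"

definition casc_aut :: "('b set \<times> 'b rule set) list \<Rightarrow> 'c set \<Rightarrow> (nat \<Rightarrow> 'b set list \<Rightarrow> 'c \<Rightarrow> 'b set)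
     \<Rightarrow> ('b set list, 'c) automaton" where
  "casc_aut Ps IP psi = (casc_states Ps, IP, casc_trans Ps psi)"

text \<open>The program T_n, given an enumeration sig n : [n^n] -> ([n] -> [n]).\<close>
definition T_atoms :: "nat \<Rightarrow> nat set" where
  "T_atoms n = {1..n ^ n}"

definition T_rules :: "(nat \<Rightarrow> nat \<Rightarrow> nat \<Rightarrow> nat) \<Rightarrow> nat \<Rightarrow> nat rule set" where
  "T_rules sig n = {(sig n k j, {j}, {k}) | j k. j \<in> {1..n} \<and> k \<in> {1..n ^ n}}"

definition T_prog :: "(nat \<Rightarrow> nat \<Rightarrow> nat \<Rightarrow> nat) \<Rightarrow> nat \<Rightarrow> nat set \<times> nat rule set" where
  "T_prog sig n = (T_atoms n, T_rules sig n)"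

end

theory Submission
  imports Defs
begin

lemma Psi_sub: "is_program Gam R \<Longrightarrow> Psi R I J \<subseteq> Gam"
  unfolding is_program_def Psi_def by fastforce

lemma Psi_T:
  assumes j: "j \<in> {1..n}" and k: "k \<in> {1..n^n}"
  shows "Psi (T_rules sig n) {j} ({1..n^n} - {k}) = {sig n k j}"
proof -
  have "Psi (T_rules sig n) {j} ({1..n^n} - {k}) \<subseteq> {sig n k j}"
    unfolding Psi_def T_rules_def by auto
  moreover have "sig n k j \<in> Psi (T_rules sig n) {j} ({1..n^n} - {k})"
    unfolding Psi_def T_rules_def using j k by blast
  ultimately show ?thesis by blast
qed

theorem theorem5p1:
  fixes sig :: "nat \<Rightarrow> nat \<Rightarrow> nat \<Rightarrow> nat"
    and Gam :: "'a set" and R :: "'a rule set"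
  assumes enum: "\<forall>n\<ge>1. bij_betw (sig n) {1..n ^ n} ({1..n} \<rightarrow>\<^sub>E {1..n})"
    and prog: "is_program Gam R"
  shows "\<exists>Ps (IP :: 'a set set) psi.
           (\<forall>p\<in>set Ps. \<exists>n\<ge>1. p = T_prog sig n) \<and>
           is_cascade Ps IP psi \<and>
           in_IS (char_aut Gam R) (casc_aut Ps IP psi)"
proof -
  have finG: "finite Gam" using prog unfolding is_program_def by auto
  define N where "N = card (Pow Gam)"
  have N1: "N \<ge> 1" unfolding N_def using finG
    by (metis Pow_bottom card_0_eq empty_iff finite_Pow_iff less_one not_le)
  obtain f where f: "bij_betw f (Pow Gam) {0..<N}"
    using ex_bij_betw_finite_nat[of "Pow Gam"] finG unfolding N_def by auto
  define e where "e I = f I + 1" for I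
  have e_in: "I \<in> Pow Gam \<Longrightarrow> e I \<in> {1..N}" for I
  proof -
    assume "I \<in> Pow Gam"
    hence "f I \<in> {0..<N}" using f unfolding bij_betw_def by blast
    thus ?thesis unfolding e_def by auto
  qed
  have e_inj: "inj_on e (Pow Gam)"
    using f unfolding e_def bij_betw_def inj_on_def by auto
  have NN: "N \<le> N ^ N" using N1
    by (metis One_nat_def le_less_trans less_irrefl_nat nat_less_le not_less_eq_eq power_increasing power_one_right)
  have sigb: "bij_betw (sig N) {1..N ^ N} ({1..N} \<rightarrow>\<^sub>E {1..N})" using enum N1 by auto
  define fJ where "fJ J = restrict (\<lambda>j. e (Psi R (inv_into (Pow Gam) e j) J)) {1..N}" for J
  have fJ_in: "fJ J \<in> {1..N} \<rightarrow>\<^sub>E {1..N}" for J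
    unfolding fJ_def using e_in Psi_sub[OF prog] by auto
  define kJ where "kJ J = inv_into {1..N^N} (sig N) (fJ J)" for J
  have kJ_in: "kJ J \<in> {1..N^N}" for J
    unfolding kJ_def using sigb fJ_in
    by (metis bij_betw_def inv_into_into)
  have kJ_sig: "sig N (kJ J) = fJ J" for J
    unfolding kJ_def using sigb fJ_in
    by (metis bij_betw_def f_inv_into_f)
  define Ps where "Ps = [T_prog sig N]"
  define psi :: "nat \<Rightarrow> nat set list \<Rightarrow> 'a set \<Rightarrow> nat set"
    where "psi i xs J = {1..N^N} - {kJ J}" for i xs J
  define IP where "IP = Pow Gam"
  define h1 where "h1 I = [{e I}]" for I
  have trans: "casc_trans Ps psi (h1 I) J = h1 (Psi R I J)" if I: "I \<in> Pow Gam" for I J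
  proof -
    have "casc_trans Ps psi (h1 I) J = [Psi (T_rules sig N) {e I} ({1..N^N} - {kJ J})]"
      unfolding casc_trans_def Ps_def h1_def psi_def T_prog_def by simp
    also have "\<dots> = [{sig N (kJ J) (e I)}]"
      using Psi_T[OF e_in[OF I] kJ_in] by simp
    also have "\<dots> = h1 (Psi R I J)"
      unfolding kJ_sig h1_def fJ_def using e_in[OF I] e_inj I by simp
    finally show ?thesis .
  qed
  have tprog: "is_program (T_atoms N) (T_rules sig N)"
  proof -
    have "(sig N 1 1, {1}, {1}) \<in> T_rules sig N" unfolding T_rules_def using N1 by auto
    moreover have "finite (T_rules sig N)"
    proof -
      have "T_rules sig N = (\<lambda>(j,k). (sig N k j, {j}, {k})) ` ({1..N} \<times> {1..N^N})"
        unfolding T_rules_def by auto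
      thus ?thesis by simp
    qed
    moreover have "\<forall>(h, bp, bn) \<in> T_rules sig N. h \<in> T_atoms N \<and> bp \<subseteq> T_atoms N \<and> bn \<subseteq> T_atoms N"
    proof -
      { fix j k assume j: "j \<in> {1..N}" and k: "k \<in> {1..N^N}"
        have "sig N k \<in> {1..N} \<rightarrow>\<^sub>E {1..N}" using sigb k unfolding bij_betw_def by blast
        hence "sig N k j \<in> {1..N}" using j by blast
        hence "sig N k j \<in> T_atoms N \<and> {j} \<subseteq> T_atoms N \<and> {k} \<subseteq> T_atoms N"
          using j k NN unfolding T_atoms_def by auto }
      thus ?thesis unfolding T_rules_def by auto
    qed
    ultimately show ?thesis unfolding is_program_def T_atoms_def using N1 by auto
  qed
  have casc: "is_cascade Ps IP psi"
  proof -
    have "\<forall>(G, R) \<in> set Ps. is_program G R" using tprog by (simp add: Ps_def T_prog_def)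
    moreover have "\<forall>xs\<in>casc_states Ps. \<forall>J\<in>IP. \<forall>i<length Ps. psi i (take i xs) J \<subseteq> fst (Ps ! i)"
      by (simp add: Ps_def psi_def T_prog_def T_atoms_def)
    moreover have "finite IP" "IP \<noteq> {}" using finG by (auto simp: IP_def)
    ultimately show ?thesis unfolding is_cascade_def by (simp add: Ps_def)
  qed
  have h1_st: "h1 ` Pow Gam \<subseteq> casc_states Ps"
  proof
    fix x assume "x \<in> h1 ` Pow Gam"
    then obtain I where I: "I \<in> Pow Gam" "x = h1 I" by blast
    have "{e I} \<subseteq> {1..N^N}" using e_in[OF I(1)] NN by auto
    thus "x \<in> casc_states Ps" unfolding casc_states_def Ps_def I(2) h1_def
      by (simp add: T_prog_def T_atoms_def)
  qed
  define A' where "A' = (h1 ` Pow Gam, IP, casc_trans Ps psi)"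
  have closed: "\<forall>q\<in>h1 ` Pow Gam. \<forall>x\<in>IP. casc_trans Ps psi q x \<in> h1 ` Pow Gam"
  proof (intro ballI)
    fix q x assume q: "q \<in> h1 ` Pow Gam" and x: "x \<in> IP"
    then obtain I where I: "I \<in> Pow Gam" "q = h1 I" by blast
    have "Psi R I x \<in> Pow Gam" using Psi_sub[OF prog] by blast
    thus "casc_trans Ps psi q x \<in> h1 ` Pow Gam" using trans[OF I(1)] I(2) by simp
  qed
  have autA: "is_automaton A'"
    unfolding is_automaton_def A'_def using closed finG by (simp add: IP_def Pow_not_empty)
  have sub: "subautomaton A' (casc_aut Ps IP psi)"
    unfolding subautomaton_def A'_def casc_aut_def
    using autA closed h1_st unfolding A'_def by simp
  have inj1: "inj_on h1 (Pow Gam)"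
    using e_inj unfolding h1_def inj_on_def by simp
  have iso: "aut_iso h1 id (char_aut Gam R) A'"
    unfolding aut_iso_def char_aut_def A'_def IP_def
    using inj1 trans by (simp add: bij_betw_def)
  have "\<forall>p\<in>set Ps. \<exists>n\<ge>1. p = T_prog sig n" unfolding Ps_def using N1 by auto
  moreover have "in_IS (char_aut Gam R) (casc_aut Ps IP psi)"
    unfolding in_IS_def using sub iso by blast
  ultimately show ?thesis using casc by blast
qed

end
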